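(* Let $n\ge1$ and $\alpha=\beta=1$. For every $\mathcal{C}\in\{\bullet,\circ\}^n$ and every $T\in\mathcal{T}_n$ with $R(T)=\mathcal{C}$, we have $$\sum_{\mathcal{C}'}W(\mathcal{C}\to\mathcal{C}')=|f^{-1}\{T\}|,$$ which is the number of last branching vertices of $T$. Consequently, $$|R^{-1}\{\mathcal{C}\}|\sum_{\mathcal{C}'}W(\mathcal{C}\to\mathcal{C}')=|(R\circ f)^{-1}\{\mathcal{C}\}|.$$
   Context: Open-boundary TASEP on $n$ sites: this is the continuous-time Markov chain on $\{\bullet,\circ\}^n$ (strings of length $n$, where $\bullet$ denotes a particle and $\circ$ a hole). Its transition rates are as follows, with $\mathcal{A},\mathcal{A}'$ arbitrary strings: - $W(\circ\mathcal{A}\to\bullet\mathcal{A})=\alpha$; - $W(\mathcal{A}\bullet\to\mathcal{A}\circ)=\beta$; - $W(\mathcal{A}\bullet\circ\mathcal{A}'\to\mathcal{A}\circ\bullet\mathcal{A}')=1$; - $W(\mathcal{C}\to\mathcal{C}')=0$ for all other pairs. A plane binary tree is a finite rooted tree in which every vertex is either an endpoint (a leaf, with no children) or has exactly two children, an ordered left child and right child. Every non-root vertex is thus either a left descendent or a right descendent of its parent. The endpoints are ordered from left to right in the planar order. $\mathcal{T}_n$ denotes the set of plane binary trees with exactly $n+2$ endpoints. The reduced configuration of $T\in\mathcal{T}_n$ is $R(T)=(t_1,\dots,t_n)\in\{\bullet,\circ\}^n$. Here $t_k=\bullet$ if the $(k+1)$-th endpoint from the left is a left child, and $t_k=\circ$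 if it is a right child. The leftmost and rightmost endpoints are ignored. A last branching vertex of a plane binary tree is a non-endpoint vertex both of whose children are endpoints. A marked tree is a pair $(T,v)$ with $T\in\mathcal{T}_n$ and $v$ a last branching vertex of $T$. The set of marked trees is $\widehat{\mathcal{T}}_n$. The map $f:\widehat{\mathcal{T}}_n\to\mathcal{T}_n$, $f(T,v)=T$, forgets the mark. *)

theory Defs
  imports Complex_Main
begin

text \<open>Configurations of the TASEP on n sites: lists of length n over bool,
  True = particle (bullet), False = hole (circ).\<close>

definition tasep_rate :: "real \<Rightarrow> real \<Rightarrow> bool list \<Rightarrow> bool list \<Rightarrow> real" where
  "tasep_rate \<alpha> \<beta> C C' =
     (if C \<noteq> [] \<and> \<not> hd C \<and> C' = C[0 := True] then \<alpha> else 0)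
   + (if C \<noteq> [] \<and> last C \<and> C' = C[length C - 1 := False] then \<beta> else 0)
   + (if \<exists>i. Suc i < length C \<and> C ! i \<and> \<not> C ! Suc i
              \<and> C' = C[i := False, Suc i := True] then 1 else 0)"

datatype ptree = Leaf | Node ptree ptree

fun num_leaves :: "ptree \<Rightarrow> nat" where
  "num_leaves Leaf = 1"
| "num_leaves (Node l r) = num_leaves l + num_leaves r"

text \<open>Sides of the endpoints from left to right; the argument is True iff the
  current vertex is a left child.  (Only used for the non-root case.)\<close>
fun leaf_sides :: "bool \<Rightarrow> ptree \<Rightarrow> bool list" where
  "leaf_sides s Leaf = [s]"
| "leaf_sides s (Node l r) = leaf_sides True l @ leaf_sides False r"

definition trees :: "nat \<Rightarrow> ptree set" where
  "trees n = {T. num_leaves T = n + 2}"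

text \<open>Reduced configuration: ignore the leftmost and rightmost endpoints.
  For a tree with at least two endpoints the root is not an endpoint.\<close>
fun reduced_config :: "ptree \<Rightarrow> bool list" where
  "reduced_config Leaf = []"
| "reduced_config (Node l r) =
     butlast (tl (leaf_sides True l @ leaf_sides False r))"

text \<open>Vertices are addressed by paths from the root (True = go to the left child).\<close>
fun subtree_at :: "ptree \<Rightarrow> bool list \<Rightarrow> ptree option" where
  "subtree_at T [] = Some T"
| "subtree_at Leaf (b # p) = None"
| "subtree_at (Node l r) (b # p) = subtree_at (if b then l else r) p"

definition last_branching :: "ptree \<Rightarrow> bool list set" where
  "last_branching T = {p. subtree_at T p = Some (Node Leaf Leaf)}"

definition marked_trees :: "nat \<Rightarrow> (ptree \<times> bool list) set" where
  "marked_trees n = {(T, v). T \<in> trees n \<and> v \<in> last_branching T}"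

definition forget_mark :: "ptree \<times> bool list \<Rightarrow> ptree" where
  "forget_mark Tv = fst Tv"

end

theory Submission
  imports Defs
begin

fun tf :: "bool list \<Rightarrow> nat" where
  "tf (a # b # xs) = (if a \<and> \<not> b then 1 else 0) + tf (b # xs)"
| "tf _ = 0"

lemma tf_card: "tf xs = card {i. Suc i < length xs \<and> xs ! i \<and> \<not> xs ! Suc i}"
proof (induction xs rule: tf.induct)
  case (1 a b xs)
  let ?S = "{i. Suc i < length (b # xs) \<and> (b # xs) ! i \<and> \<not> (b # xs) ! Suc i}"
  have eq: "{i. Suc i < length (a # b # xs) \<and> (a # b # xs) ! i \<and> \<not> (a # b # xs) ! Suc i}
      = (if a \<and> \<not> b then {0} else {}) \<union> Suc ` ?S"
    apply (auto simp: image_iff split: if_splits)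
     apply (case_tac x; auto)+
    done
  have "finite ?S" by (rule finite_subset[of _ "{..<length (b#xs)}"]) auto
  then have "card ((if a \<and> \<not> b then {0} else {}) \<union> Suc ` ?S) = (if a \<and> \<not> b then 1 else 0) + card ?S"
    by (auto simp: card_image card_insert_if)
  then show ?case using 1 eq by simp
next
  case "2_1" then show ?case by simp
next
  case "2_2" then show ?case by simp
qed

lemma tf_append: "tf (xs @ ys) = tf xs + tf ys + (if xs \<noteq> [] \<and> ys \<noteq> [] \<and> last xs \<and> \<not> hd ys then 1 else 0)"
proof (induction xs rule: tf.induct)
  case (1 a b xs) then show ?case by simp
next
  case ("2_1") then show ?case by simp
next
  case ("2_2" v) then show ?case by (cases ys) auto
qed

fun cherries :: "ptree \<Rightarrow> nat" where
  "cherries Leaf = 0"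
| "cherries (Node l r) = (if l = Leaf \<and> r = Leaf then 1 else 0) + cherries l + cherries r"

lemma leaf_sides_ne: "leaf_sides s T \<noteq> []"
  by (induction T arbitrary: s) auto

lemma leaf_sides_hd: "hd (leaf_sides True T) = True"
  by (induction T) (auto simp: leaf_sides_ne)

lemma leaf_sides_last: "last (leaf_sides False T) = False"
  by (induction T) (auto simp: leaf_sides_ne)

lemma leaf_sides_len: "length (leaf_sides s T) = num_leaves T"
  by (induction T arbitrary: s) auto

lemma tf_cherries: "tf (leaf_sides s T) = cherries T"
proof (induction T arbitrary: s)
  case Leaf then show ?case by simp
next
  case (Node l r)
  have a: "last (leaf_sides True l) = (l = Leaf)"
    by (cases l) (auto simp: leaf_sides_last leaf_sides_ne)
  have b: "hd (leaf_sides False r) = (r \<noteq> Leaf)"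
    by (cases r) (auto simp: leaf_sides_hd leaf_sides_ne)
  show ?case using Node a b by (simp add: tf_append leaf_sides_ne)
qed

lemma lb_Leaf: "last_branching Leaf = {}"
  unfolding last_branching_def
  apply auto apply (case_tac x) apply auto done

lemma lb_Node: "last_branching (Node l r) =
   (if l = Leaf \<and> r = Leaf then {[]} else {}) \<union> Cons True ` last_branching l \<union> Cons False ` last_branching r"
proof (rule set_eqI)
  fix x show "x \<in> last_branching (Node l r) \<longleftrightarrow> x \<in> (if l = Leaf \<and> r = Leaf then {[]} else {}) \<union> Cons True ` last_branching l \<union> Cons False ` last_branching r"
  proof (cases x)
    case Nil then show ?thesis by (auto simp: last_branching_def)
  next
    case (Cons a p) then show ?thesis by (cases a) (auto simp: last_branching_def)
  qed
qed

lemma lb_card: "finite (last_branching T) \<and> card (last_branching T) = cherries T"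
proof (induction T)
  case Leaf then show ?case by (simp add: lb_Leaf)
next
  case (Node l r)
  have d1: "Cons True ` last_branching l \<inter> Cons False ` last_branching r = {}" by auto
  have c1: "card (Cons True ` last_branching l) = cherries l"
    using Node by (simp add: card_image)
  have c2: "card (Cons False ` last_branching r) = cherries r"
    using Node by (simp add: card_image)
  have f: "finite (Cons True ` last_branching l \<union> Cons False ` last_branching r)" using Node by simp
  have "card (Cons True ` last_branching l \<union> Cons False ` last_branching r) = cherries l + cherries r"
    using Node c1 c2 d1 by (simp add: card_Un_disjoint)
  moreover have "[] \<notin> Cons True ` last_branching l \<union> Cons False ` last_branching r" by auto
  ultimately show ?case using f by (auto simp: lb_Node)
qed

lemma trees_finite_le: "finite {T. num_leaves T \<le> k}"
proof (induction k)
  case 0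
  have "num_leaves T \<ge> 1" for T by (induction T) auto
  then have "{T. num_leaves T \<le> 0} = {}" by (metis (mono_tags, lifting) Collect_empty_eq le_zero_eq not_one_le_zero)
  then show ?case by (metis finite.emptyI)
next
  case (Suc k)
  have pos: "num_leaves T \<ge> 1" for T by (induction T) auto
  have "{T. num_leaves T \<le> Suc k} \<subseteq> insert Leaf ((\<lambda>(l,r). Node l r) ` ({T. num_leaves T \<le> k} \<times> {T. num_leaves T \<le> k}))"
  proof
    fix T assume "T \<in> {T. num_leaves T \<le> Suc k}"
    then show "T \<in> insert Leaf ((\<lambda>(l,r). Node l r) ` ({T. num_leaves T \<le> k} \<times> {T. num_leaves T \<le> k}))"
    proof (cases T)
      case Leaf then show ?thesis by simp
    next
      case (Node l r)
      with \<open>T \<in> _\<close> pos[of l] pos[of r] have "num_leaves l \<le> k" "num_leaves r \<le> k" by auto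
      then show ?thesis using Node by (auto simp: image_iff)
    qed
  qed
  then show ?case by (rule finite_subset) (use Suc in auto)
qed

lemma trees_finite: "finite (trees n)"
  unfolding trees_def by (rule finite_subset[OF _ trees_finite_le[of "n+2"]]) auto

lemma list_decomp: "length L \<ge> 2 \<Longrightarrow> L = hd L # butlast (tl L) @ [last L]"
  apply (cases L) apply simp
  apply (case_tac list rule: rev_cases) apply auto done

lemma rate_sum:
  assumes "length C = n" "n \<ge> 1"
  shows "(\<Sum>C' \<in> {C'. length C' = n}. tasep_rate 1 1 C C') = real (tf (True # C @ [False]))"
proof -
  let ?S = "{C'::bool list. length C' = n}"
  have fin: "finite ?S" using finite_lists_length_eq[of "UNIV :: bool set"] by simp
  have Cne: "C \<noteq> []" using assms by auto
  let ?I = "{i. Suc i < length C \<and> C ! i \<and> \<not> C ! Suc i}"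
  let ?f = "\<lambda>i. C[i := False, Suc i := True]"
  have s1: "(\<Sum>C' \<in> ?S. (if C \<noteq> [] \<and> \<not> hd C \<and> C' = C[0 := True] then 1 else 0 :: real))
      = (if \<not> hd C then 1 else 0)"
    using Cne assms by (cases "hd C") (simp_all add: fin)
  have s2: "(\<Sum>C' \<in> ?S. (if C \<noteq> [] \<and> last C \<and> C' = C[length C - 1 := False] then 1 else 0 :: real))
      = (if last C then 1 else 0)"
    using Cne assms by (cases "last C") (simp_all add: fin)
  have "(\<Sum>C' \<in> ?S. (if \<exists>i. Suc i < length C \<and> C ! i \<and> \<not> C ! Suc i \<and> C' = ?f i then 1 else 0 :: real))
      = (\<Sum>C' \<in> {C' \<in> ?S. \<exists>i. Suc i < length C \<and> C ! i \<and> \<not> C ! Suc i \<and> C' = ?f i}. 1)"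
    using fin by (simp add: sum.inter_filter[symmetric])
  also have "{C' \<in> ?S. \<exists>i. Suc i < length C \<and> C ! i \<and> \<not> C ! Suc i \<and> C' = ?f i} = ?f ` ?I"
    using assms by auto
  also have "inj_on ?f ?I"
  proof
    fix i j assume i: "i \<in> ?I" and j: "j \<in> ?I" and e: "?f i = ?f j"
    show "i = j"
    proof (rule ccontr)
      assume ne: "i \<noteq> j"
      have "?f i ! i = False" using i by (auto simp: nth_list_update)
      moreover have "?f j ! i = True" using i j ne by (auto simp: nth_list_update)
      ultimately show False using e by simp
    qed
  qed
  then have "(\<Sum>C' \<in> ?f ` ?I. 1 :: real) = real (card ?I)" by (simp add: card_image)
  finally have s3: "(\<Sum>C' \<in> ?S. (if \<exists>i. Suc i < length C \<and> C ! i \<and> \<not> C ! Suc i \<and> C' = ?f i then 1 else 0 :: real)) = real (card ?I)" .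
  have "(\<Sum>C' \<in> ?S. tasep_rate 1 1 C C') =
     (\<Sum>C' \<in> ?S. (if C \<noteq> [] \<and> \<not> hd C \<and> C' = C[0 := True] then 1 else 0 :: real))
   + (\<Sum>C' \<in> ?S. (if C \<noteq> [] \<and> last C \<and> C' = C[length C - 1 := False] then 1 else 0 :: real))
   + (\<Sum>C' \<in> ?S. (if \<exists>i. Suc i < length C \<and> C ! i \<and> \<not> C ! Suc i \<and> C' = ?f i then 1 else 0 :: real))"
    unfolding tasep_rate_def by (simp add: sum.distrib)
  also have "\<dots> = (if \<not> hd C then 1 else 0) + (if last C then 1 else 0) + real (card ?I)"
    using s1 s2 s3 by simp
  finally have A: "(\<Sum>C' \<in> ?S. tasep_rate 1 1 C C') = (if \<not> hd C then 1 else 0) + (if last C then 1 else 0) + real (card ?I)" .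
  have "tf (True # C @ [False]) = tf ([True] @ (C @ [False]))" by simp
  also have "\<dots> = (if \<not> hd C then 1 else 0) + tf (C @ [False])"
    by (subst tf_append) (use Cne in auto)
  also have "tf (C @ [False]) = tf C + (if last C then 1 else 0)"
    by (subst tf_append) (use Cne in auto)
  finally show ?thesis using A tf_card[of C] by simp
qed

lemma tree_rate:
  assumes "T \<in> trees n" "n \<ge> 1"
  shows "tf (True # reduced_config T @ [False]) = card (last_branching T)"
proof -
  obtain l r where T: "T = Node l r" using assms unfolding trees_def by (cases T) auto
  let ?L = "leaf_sides True T"
  have len: "length ?L \<ge> 2" using assms by (simp add: leaf_sides_len trees_def)
  have "?L = hd ?L # butlast (tl ?L) @ [last ?L]" by (rule list_decomp[OF len])
  moreover have "hd ?L = True" by (rule leaf_sides_hd)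
  moreover have "last ?L = False" using T by (simp add: leaf_sides_ne leaf_sides_last)
  moreover have "reduced_config T = butlast (tl ?L)" using T by simp
  ultimately have "True # reduced_config T @ [False] = ?L" by simp
  then show ?thesis using tf_cherries[of True T] lb_card[of T] by simp
qed

theorem mainTheorem3:
  fixes n :: nat and C :: "bool list"
  assumes "n \<ge> 1" and "length C = n"
  shows "(\<forall>T \<in> trees n. reduced_config T = C \<longrightarrow>
            (\<Sum>C' \<in> {C'. length C' = n}. tasep_rate 1 1 C C')
              = real (card {x \<in> marked_trees n. forget_mark x = T})
          \<and> card {x \<in> marked_trees n. forget_mark x = T} = card (last_branching T))
       \<and> real (card {T \<in> trees n. reduced_config T = C})
            * (\<Sum>C' \<in> {C'. length C' = n}. tasep_rate 1 1 C C')
          = real (card {x \<in> marked_trees n. reduced_config (forget_mark x) = C})"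
proof -
  have M: "card {x \<in> marked_trees n. forget_mark x = T} = card (last_branching T)" if "T \<in> trees n" for T
  proof -
    have "{x \<in> marked_trees n. forget_mark x = T} = Pair T ` last_branching T"
      using that by (auto simp: marked_trees_def forget_mark_def)
    then show ?thesis by (simp add: card_image inj_on_def)
  qed
  have R: "(\<Sum>C' \<in> {C'. length C' = n}. tasep_rate 1 1 C C') = real (card (last_branching T))"
    if "T \<in> trees n" "reduced_config T = C" for T
    using rate_sum[OF assms(2) assms(1)] tree_rate[OF that(1) assms(1)] that(2) by simp
  let ?A = "{T \<in> trees n. reduced_config T = C}"
  have "{x \<in> marked_trees n. reduced_config (forget_mark x) = C} = Sigma ?A last_branching"
    by (auto simp: marked_trees_def forget_mark_def)
  then have "card {x \<in> marked_trees n. reduced_config (forget_mark x) = C} = (\<Sum>T\<in>?A. card (last_branching T))"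
    using trees_finite[of n] lb_card by (simp add: card_SigmaI)
  then have "real (card {x \<in> marked_trees n. reduced_config (forget_mark x) = C})
      = real (\<Sum>T\<in>?A. card (last_branching T))" by simp
  also have "\<dots> = (\<Sum>T\<in>?A. real (card (last_branching T)))" by simp
  also have "\<dots> = (\<Sum>T\<in>?A. (\<Sum>C' \<in> {C'. length C' = n}. tasep_rate 1 1 C C'))"
    by (rule sum.cong) (use R in auto)
  finally show ?thesis using M R by (simp add: mult.commute)
qed

end
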